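(* If $\rho$ is a function quasi-norm over a $\sigma$-finite measure space $(\Omega,\Sigma,\mu)$ with the weak Fatou property, then $\rho$ has the rough Fatou property.
   Context: $L_0^+(\mu)$: measurable functions $\Omega\to[0,\infty]$ modulo a.e. equality. A function quasi-norm is $\rho\colon L_0^+(\mu)\to[0,\infty]$ with (F1) $\rho(tf)=t\rho(f)$, $t\ge0$; (F2) $f\le g$ a.e. $\Rightarrow\rho(f)\le\rho(g)$; (F3) $\rho(\chi_E)<\infty$ if $\mu(E)<\infty$; (F4) for all $E$ with $\mu(E)<\infty$ and $\varepsilon>0$ there is $\delta>0$ with $\mu(A)\le\varepsilon$ whenever $A\subseteq E$ is measurable with $\rho(\chi_A)\le\delta$; (F5) $\rho(f+g)\le\kappa(\rho(f)+\rho(g))$ for a constant $\kappa$. $\rho$ has the rough Fatou property if there is a constant $C$ with $\rho(\lim_nf_n)\le C\lim_n\rho(f_n)$ for every non-decreasing sequence $(f_n)$ in $L_0^+(\mu)$; it has the weak Fatou property if $\rho(\lim_nf_n)<\infty$ whenever $(f_n)$ is non-decreasing in $L_0^+(\mu)$ with $\lim_n\rho(f_n)<\infty$. *)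

theory Defs
  imports "HOL-Analysis.Analysis"
begin

text \<open>Elements of L_0^+(mu) are represented by Borel-measurable functions into ennreal
  (values in [0,infinity]); identification modulo a.e. equality is built into (F2),
  which makes rho invariant under a.e. equality. rho is only constrained on measurable functions.\<close>

definition function_quasi_norm :: "'a measure \<Rightarrow> (('a \<Rightarrow> ennreal) \<Rightarrow> ennreal) \<Rightarrow> bool" where
  "function_quasi_norm M \<rho> \<longleftrightarrow>
     \<comment> \<open>(F1)\<close>
     (\<forall>f \<in> borel_measurable M. \<forall>t::real. t \<ge> 0 \<longrightarrow>
        \<rho> (\<lambda>x. ennreal t * f x) = ennreal t * \<rho> f) \<and>
     \<comment> \<open>(F2)\<close>
     (\<forall>f \<in> borel_measurable M. \<forall>g \<in> borel_measurable M.
        (AE x in M. f x \<le> g x) \<longrightarrow> \<rho> f \<le> \<rho> g) \<and>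
     \<comment> \<open>(F3)\<close>
     (\<forall>E \<in> sets M. emeasure M E < \<infinity> \<longrightarrow> \<rho> (indicator E) < \<infinity>) \<and>
     \<comment> \<open>(F4)\<close>
     (\<forall>E \<in> sets M. emeasure M E < \<infinity> \<longrightarrow>
        (\<forall>\<epsilon>::real. \<epsilon> > 0 \<longrightarrow> (\<exists>\<delta>::real. \<delta> > 0 \<and>
           (\<forall>A \<in> sets M. A \<subseteq> E \<longrightarrow> \<rho> (indicator A) \<le> ennreal \<delta> \<longrightarrow>
               emeasure M A \<le> ennreal \<epsilon>)))) \<and>
     \<comment> \<open>(F5)\<close>
     (\<exists>\<kappa>::real. \<forall>f \<in> borel_measurable M. \<forall>g \<in> borel_measurable M.
        \<rho> (\<lambda>x. f x + g x) \<le> ennreal \<kappa> * (\<rho> f + \<rho> g))"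

text \<open>A non-decreasing sequence in L_0^+(mu): each term measurable, f_n \<le> f_{n+1} a.e.
  Its limit is (a.e.) the pointwise supremum.\<close>

definition nondecr_seq :: "'a measure \<Rightarrow> (nat \<Rightarrow> 'a \<Rightarrow> ennreal) \<Rightarrow> bool" where
  "nondecr_seq M f \<longleftrightarrow> (\<forall>n. f n \<in> borel_measurable M) \<and> (\<forall>n. AE x in M. f n x \<le> f (Suc n) x)"

definition rough_fatou :: "'a measure \<Rightarrow> (('a \<Rightarrow> ennreal) \<Rightarrow> ennreal) \<Rightarrow> bool" where
  "rough_fatou M \<rho> \<longleftrightarrow> (\<exists>C::real. \<forall>f. nondecr_seq M f \<longrightarrow>
      \<rho> (\<lambda>x. SUP n. f n x) \<le> ennreal C * (SUP n. \<rho> (f n)))"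

definition weak_fatou :: "'a measure \<Rightarrow> (('a \<Rightarrow> ennreal) \<Rightarrow> ennreal) \<Rightarrow> bool" where
  "weak_fatou M \<rho> \<longleftrightarrow> (\<forall>f. nondecr_seq M f \<longrightarrow>
      (SUP n. \<rho> (f n)) < \<infinity> \<longrightarrow> \<rho> (\<lambda>x. SUP n. f n x) < \<infinity>)"

end

theory Submission
  imports Defs
begin

lemma fqn_mono:
  assumes "function_quasi_norm M \<rho>" "f \<in> borel_measurable M" "g \<in> borel_measurable M"
    "AE x in M. f x \<le> g x"
  shows "\<rho> f \<le> \<rho> g"
proof -
  have "\<forall>f \<in> borel_measurable M. \<forall>g \<in> borel_measurable M.
        (AE x in M. f x \<le> g x) \<longrightarrow> \<rho> f \<le> \<rho> g"
    using assms(1) unfolding function_quasi_norm_def by (elim conjE) assumption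
  then show ?thesis using assms(2-4) by blast
qed

lemma fqn_hom:
  assumes "function_quasi_norm M \<rho>" "f \<in> borel_measurable M" "t \<ge> 0"
  shows "\<rho> (\<lambda>x. ennreal t * f x) = ennreal t * \<rho> f"
proof -
  have "\<forall>f \<in> borel_measurable M. \<forall>t::real. t \<ge> 0 \<longrightarrow>
        \<rho> (\<lambda>x. ennreal t * f x) = ennreal t * \<rho> f"
    using assms(1) unfolding function_quasi_norm_def by (elim conjE) assumption
  then show ?thesis using assms(2-3) by blast
qed

lemma fqn_sum:
  assumes "function_quasi_norm M \<rho>"
  obtains K :: real where "K \<ge> 1" "\<And>g n. (\<And>k. g k \<in> borel_measurable M) \<Longrightarrow>
     \<rho> (\<lambda>x. \<Sum>k\<le>n. g k x) \<le> (\<Sum>k\<le>n. ennreal (K ^ (k+1)) * \<rho> (g k))"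
proof -
  obtain \<kappa> :: real where k: "\<And>f g. f \<in> borel_measurable M \<Longrightarrow> g \<in> borel_measurable M \<Longrightarrow>
        \<rho> (\<lambda>x. f x + g x) \<le> ennreal \<kappa> * (\<rho> f + \<rho> g)"
  proof -
    have "\<exists>\<kappa>::real. \<forall>f \<in> borel_measurable M. \<forall>g \<in> borel_measurable M.
        \<rho> (\<lambda>x. f x + g x) \<le> ennreal \<kappa> * (\<rho> f + \<rho> g)"
      using assms unfolding function_quasi_norm_def by (elim conjE) assumption
    then obtain \<kappa> :: real where "\<forall>f \<in> borel_measurable M. \<forall>g \<in> borel_measurable M.
        \<rho> (\<lambda>x. f x + g x) \<le> ennreal \<kappa> * (\<rho> f + \<rho> g)" by (elim exE)
    then show ?thesis using that by blast
  qed
  define K where "K = max \<kappa> 1"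
  have K1: "K \<ge> 1" unfolding K_def by simp
  have tri: "\<rho> (\<lambda>x. f x + g x) \<le> ennreal K * (\<rho> f + \<rho> g)"
    if "f \<in> borel_measurable M" "g \<in> borel_measurable M" for f g
  proof -
    have "ennreal \<kappa> \<le> ennreal K" unfolding K_def by (intro ennreal_leI) simp
    then have "ennreal \<kappa> * (\<rho> f + \<rho> g) \<le> ennreal K * (\<rho> f + \<rho> g)"
      by (intro mult_right_mono) auto
    with k[OF that] show ?thesis by (rule order_trans)
  qed
  have main: "\<rho> (\<lambda>x. \<Sum>k\<le>n. g k x) \<le> (\<Sum>k\<le>n. ennreal (K ^ (k+1)) * \<rho> (g k))"
    if "\<And>k. g k \<in> borel_measurable M" for g n
    using that
  proof (induction n arbitrary: g)
    case 0
    have "\<rho> (g 0) = 1 * \<rho> (g 0)" by simp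
    also have "\<dots> \<le> ennreal K * \<rho> (g 0)"
    proof (rule mult_right_mono)
      show "1 \<le> ennreal K" using K1 ennreal_leI[of 1 K] by simp
    qed simp
    finally show ?case by simp
  next
    case (Suc n)
    have eq: "(\<lambda>x. \<Sum>k\<le>Suc n. g k x) = (\<lambda>x. g 0 x + (\<Sum>k\<le>n. g (Suc k) x))"
      by (simp only: sum.atMost_Suc_shift)
    have m: "(\<lambda>x. \<Sum>k\<le>n. g (Suc k) x) \<in> borel_measurable M"
      using Suc.prems by (intro borel_measurable_sum) auto
    have "\<rho> (\<lambda>x. \<Sum>k\<le>Suc n. g k x) \<le> ennreal K * (\<rho> (g 0) + \<rho> (\<lambda>x. \<Sum>k\<le>n. g (Suc k) x))"
      unfolding eq by (rule tri[OF Suc.prems m])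
    also have "\<dots> \<le> ennreal K * (\<rho> (g 0) + (\<Sum>k\<le>n. ennreal (K ^ (k+1)) * \<rho> (g (Suc k))))"
      using Suc.IH[of "\<lambda>k. g (Suc k)"] Suc.prems by (intro mult_left_mono add_left_mono) auto
    also have "\<dots> = ennreal K * \<rho> (g 0) + (\<Sum>k\<le>n. ennreal (K ^ (Suc k+1)) * \<rho> (g (Suc k)))"
    proof -
      have pw: "ennreal K * (ennreal (K ^ (k+1)) * x) = ennreal (K ^ (Suc k+1)) * x" for k x
      proof -
        have "ennreal K * (ennreal (K ^ (k+1)) * x) = (ennreal K * ennreal (K ^ (k+1))) * x"
          by (simp add: mult.assoc)
        also have "ennreal K * ennreal (K ^ (k+1)) = ennreal (K * K ^ (k+1))"
          using K1 by (subst ennreal_mult) auto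
        finally show ?thesis by simp
      qed
      show ?thesis by (simp only: distrib_left sum_distrib_left pw)
    qed
    also have "\<dots> = (\<Sum>k\<le>Suc n. ennreal (K ^ (k+1)) * \<rho> (g k))"
      by (simp only: sum.atMost_Suc_shift) simp
    finally show ?case .
  qed
  show ?thesis by (rule that[OF K1 main])
qed

lemma reduce_incseq:
  assumes fqn: "function_quasi_norm M \<rho>" and nr: "\<not> rough_fatou M \<rho>"
  shows "\<exists>f. (\<forall>n. f n \<in> borel_measurable M) \<and> (\<forall>n x. f n x \<le> f (Suc n) x) \<and>
           ennreal C * (SUP n. \<rho> (f n)) < \<rho> (\<lambda>x. SUP n. f n x)"
proof -
  obtain f where nd: "nondecr_seq M f" and gt: "\<not> \<rho> (\<lambda>x. SUP n. f n x) \<le> ennreal C * (SUP n. \<rho> (f n))"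
    using nr unfolding rough_fatou_def by blast
  have fm: "\<And>n. f n \<in> borel_measurable M" and ae: "\<And>n. AE x in M. f n x \<le> f (Suc n) x"
    using nd unfolding nondecr_seq_def by auto
  define g where "g n x = (SUP m\<in>{..n}. f m x)" for n x
  have gm: "g n \<in> borel_measurable M" for n
    unfolding g_def by (rule borel_measurable_SUP) (auto simp: fm)
  have ginc: "g n x \<le> g (Suc n) x" for n x
    unfolding g_def by (rule SUP_subset_mono) auto
  have gsup: "(\<lambda>x. SUP n. g n x) = (\<lambda>x. SUP n. f n x)"
  proof
    fix x
    show "(SUP n. g n x) = (SUP n. f n x)"
    proof (rule antisym)
      show "(SUP n. g n x) \<le> (SUP n. f n x)"
        unfolding g_def
      proof (intro SUP_least)
        fix n m :: nat assume "m \<in> {..n}"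
        show "f m x \<le> (SUP n. f n x)" by (rule SUP_upper) simp
      qed
      show "(SUP n. f n x) \<le> (SUP n. g n x)"
      proof (intro SUP_least)
        fix n
        have "f n x \<le> g n x" unfolding g_def by (rule SUP_upper) auto
        also have "\<dots> \<le> (SUP n. g n x)" by (rule SUP_upper) auto
        finally show "f n x \<le> (SUP n. g n x)" .
      qed
    qed
  qed
  have aeall: "AE x in M. \<forall>n. f n x \<le> f (Suc n) x"
    using ae by (simp add: AE_all_countable)
  have gle: "\<rho> (g n) \<le> \<rho> (f n)" for n
  proof (rule fqn_mono[OF fqn gm fm])
    show "AE x in M. g n x \<le> f n x"
      using aeall
    proof eventually_elim
      case (elim x)
      have "f m x \<le> f n x" if "m \<le> n" for m
        using lift_Suc_mono_le[of "\<lambda>k. f k x", OF _ that] elim by blast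
      then show ?case unfolding g_def by (intro SUP_least) auto
    qed
  qed
  have "ennreal C * (SUP n. \<rho> (g n)) \<le> ennreal C * (SUP n. \<rho> (f n))"
  proof (rule mult_left_mono)
    show "(SUP n. \<rho> (g n)) \<le> (SUP n. \<rho> (f n))"
      by (rule SUP_mono) (use gle in blast)
  qed simp
  moreover have "ennreal C * (SUP n. \<rho> (f n)) < \<rho> (\<lambda>x. SUP n. f n x)"
    using gt by (simp only: not_le)
  ultimately have "ennreal C * (SUP n. \<rho> (g n)) < \<rho> (\<lambda>x. SUP n. g n x)"
    unfolding gsup by (rule le_less_trans)
  then show ?thesis using gm ginc by (intro exI[of _ g]) simp
qed

lemma scale_seq:
  assumes fqn: "function_quasi_norm M \<rho>" and fm: "\<And>n. f n \<in> borel_measurable M"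
    and finc: "\<And>n x. f n x \<le> f (Suc n) x" and t: "t \<ge> 0"
  defines "g \<equiv> (\<lambda>n x. ennreal t * f n x)"
  shows "(\<forall>n. g n \<in> borel_measurable M) \<and> (\<forall>n x. g n x \<le> g (Suc n) x) \<and>
     (SUP n. \<rho> (g n)) = ennreal t * (SUP n. \<rho> (f n)) \<and>
     \<rho> (\<lambda>x. SUP n. g n x) = ennreal t * \<rho> (\<lambda>x. SUP n. f n x)"
proof (intro conjI allI)
  show "g n \<in> borel_measurable M" for n unfolding g_def
    by (rule borel_measurable_times_ennreal) (auto simp: fm)
  show "g n x \<le> g (Suc n) x" for n x unfolding g_def using finc by (intro mult_left_mono) auto
  show "(SUP n. \<rho> (g n)) = ennreal t * (SUP n. \<rho> (f n))"
    unfolding g_def using fqn_hom[OF fqn fm t] by (simp add: SUP_mult_left_ennreal)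
  have sm: "(\<lambda>x. SUP n. f n x) \<in> borel_measurable M"
    by (rule borel_measurable_SUP) (auto simp: fm)
  have "(\<lambda>x. SUP n. g n x) = (\<lambda>x. ennreal t * (SUP n. f n x))"
    unfolding g_def by (simp add: SUP_mult_left_ennreal)
  then show "\<rho> (\<lambda>x. SUP n. g n x) = ennreal t * \<rho> (\<lambda>x. SUP n. f n x)"
    using fqn_hom[OF fqn sm t] by simp
qed

lemma choose_seq:
  assumes fqn: "function_quasi_norm M \<rho>" and nr: "\<not> rough_fatou M \<rho>" and a: "a > 0"
  shows "\<exists>f. (\<forall>n. f n \<in> borel_measurable M) \<and> (\<forall>n x. f n x \<le> f (Suc n) x) \<and>
           (SUP n. \<rho> (f n)) \<le> ennreal a \<and> ennreal (real k) \<le> \<rho> (\<lambda>x. SUP n. f n x)"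
proof -
  define C where "C = (real k + 1) / a"
  have C0: "C > 0" unfolding C_def using a by simp
  obtain f where fm: "\<And>n. f n \<in> borel_measurable M" and finc: "\<And>n x. f n x \<le> f (Suc n) x"
    and lt: "ennreal C * (SUP n. \<rho> (f n)) < \<rho> (\<lambda>x. SUP n. f n x)"
    using reduce_incseq[OF fqn nr, of C] by blast
  define S where "S = (SUP n. \<rho> (f n))"
  define r where "r = \<rho> (\<lambda>x. SUP n. f n x)"
  have lt': "ennreal C * S < r" using lt unfolding S_def r_def .
  have key: "\<exists>t\<ge>0. ennreal t * S \<le> ennreal a \<and> ennreal (real k) \<le> ennreal t * r"
  proof (cases "S = 0")
    case True
    show ?thesis
    proof (cases "r = top")
      case True
      then show ?thesis using \<open>S = 0\<close> by (intro exI[of _ 1]) auto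
    next
      case False
      then obtain r0 where r0: "r = ennreal r0" "r0 \<ge> 0" using less_top_ennreal top.not_eq_extremum by blast
      have "r0 > 0" using lt' \<open>S = 0\<close> r0 by (cases "r0 = 0") auto
      have "ennreal (real k / r0) * r = ennreal (real k)"
        using r0 \<open>r0 > 0\<close> by (simp add: ennreal_mult[symmetric])
      then show ?thesis using \<open>S = 0\<close> \<open>r0 > 0\<close> by (intro exI[of _ "real k / r0"]) auto
    qed
  next
    case False
    have "S \<noteq> top"
    proof
      assume "S = top"
      then have "ennreal C * S = top" using C0 by (simp add: ennreal_mult_top)
      then show False using lt' by simp
    qed
    then obtain s0 where s0: "S = ennreal s0" "s0 \<ge> 0" using less_top_ennreal top.not_eq_extremum by blast
    have "s0 > 0" using False s0 by (cases "s0 = 0") auto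
    define t where "t = a / s0"
    have t0: "t \<ge> 0" unfolding t_def using a \<open>s0 > 0\<close> by simp
    have tS: "ennreal t * S = ennreal a"
      unfolding t_def using s0 \<open>s0 > 0\<close> a by (simp add: ennreal_mult[symmetric])
    have "ennreal (real k) \<le> ennreal (real k + 1)" by (intro ennreal_leI) simp
    also have "ennreal (real k + 1) = ennreal t * (ennreal C * S)"
      unfolding t_def C_def using s0 \<open>s0 > 0\<close> a
      by (simp add: ennreal_mult[symmetric] mult.assoc[symmetric] del: of_nat_Suc)
    also have "\<dots> \<le> ennreal t * r" using lt' by (intro mult_left_mono) auto
    finally show ?thesis using tS t0 by auto
  qed
  then obtain t where t: "t \<ge> 0" "ennreal t * S \<le> ennreal a" "ennreal (real k) \<le> ennreal t * r"
    by blast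
  show ?thesis
  proof (intro exI[of _ "\<lambda>n x. ennreal t * f n x"])
    note sc = scale_seq[where f=f and t=t, OF fqn fm finc t(1)]
    show "(\<forall>n. (\<lambda>x. ennreal t * f n x) \<in> borel_measurable M) \<and>
      (\<forall>n x. ennreal t * f n x \<le> ennreal t * f (Suc n) x) \<and>
      (SUP n. \<rho> (\<lambda>x. ennreal t * f n x)) \<le> ennreal a \<and>
      ennreal (real k) \<le> \<rho> (\<lambda>x. SUP n. ennreal t * f n x)"
      using sc t(2,3) unfolding S_def r_def by simp
  qed
qed

lemma half_sum: "(\<Sum>k\<le>n. (1/2::real) ^ (k+1)) = 1 - (1/2) ^ (n+1)"
  by (induction n) (auto simp: field_simps)

theorem proposition3p15:
  fixes M :: "'a measure" and \<rho> :: "('a \<Rightarrow> ennreal) \<Rightarrow> ennreal"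
  assumes "sigma_finite_measure M"
    and "function_quasi_norm M \<rho>"
    and "weak_fatou M \<rho>"
  shows "rough_fatou M \<rho>"
proof (rule ccontr)
  assume nr: "\<not> rough_fatou M \<rho>"
  note fqn = assms(2)
  obtain K :: real where K1: "K \<ge> 1" and Ksum: "\<And>g n. (\<And>k. g k \<in> borel_measurable M) \<Longrightarrow>
     \<rho> (\<lambda>x. \<Sum>k\<le>n. g k x) \<le> (\<Sum>k\<le>n. ennreal (K ^ (k+1)) * \<rho> (g k))"
    using fqn_sum[OF fqn] by blast
  define a where "a k = 1 / (2*K)^(k+1)" for k :: nat
  have apos: "a k > 0" for k unfolding a_def using K1 by simp
  define P where "P k f \<longleftrightarrow> (\<forall>n. f n \<in> borel_measurable M) \<and> (\<forall>n x. f n x \<le> f (Suc n) x) \<and>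
           (SUP n. \<rho> (f n)) \<le> ennreal (a k) \<and> ennreal (real k) \<le> \<rho> (\<lambda>x. SUP n. f n x)"
    for k :: nat and f :: "nat \<Rightarrow> 'a \<Rightarrow> ennreal"
  have ex: "\<exists>f. P k f" for k
    unfolding P_def by (rule choose_seq[OF fqn nr apos])
  obtain F where F: "\<And>k. P k (F k)" using ex by metis
  have Fm: "\<And>k n. F k n \<in> borel_measurable M" using F unfolding P_def by blast
  have Finc: "\<And>k n x. F k n x \<le> F k (Suc n) x" using F unfolding P_def by blast
  have Fsup: "\<And>k. (SUP n. \<rho> (F k n)) \<le> ennreal (a k)" using F unfolding P_def by blast
  have Fbig: "\<And>k. ennreal (real k) \<le> \<rho> (\<lambda>x. SUP n. F k n x)" using F unfolding P_def by blast
  define h where "h n x = (\<Sum>k\<le>n. F k n x)" for n x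
  have hm: "h n \<in> borel_measurable M" for n
    unfolding h_def by (rule borel_measurable_sum) (simp add: Fm)
  have hinc: "h n x \<le> h (Suc n) x" for n x
  proof -
    have "h n x \<le> (\<Sum>k\<le>n. F k (Suc n) x)" unfolding h_def by (rule sum_mono) (rule Finc)
    also have "\<dots> \<le> h (Suc n) x" unfolding h_def by (rule sum_mono2) auto
    finally show ?thesis .
  qed
  have nd: "nondecr_seq M h" unfolding nondecr_seq_def using hm hinc by auto
  have hbound: "\<rho> (h n) \<le> ennreal 1" for n
  proof -
    have "\<rho> (h n) = \<rho> (\<lambda>x. \<Sum>k\<le>n. F k n x)" unfolding h_def ..
    also have "\<dots> \<le> (\<Sum>k\<le>n. ennreal (K ^ (k+1)) * \<rho> (F k n))"
      by (rule Ksum) (rule Fm)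
    also have "\<dots> \<le> (\<Sum>k\<le>n. ennreal (K ^ (k+1)) * ennreal (a k))"
    proof (rule sum_mono)
      fix k assume "k \<in> {..n}"
      have "\<rho> (F k n) \<le> (SUP n. \<rho> (F k n))" by (rule SUP_upper) simp
      also have "\<dots> \<le> ennreal (a k)" by (rule Fsup)
      finally show "ennreal (K ^ (k+1)) * \<rho> (F k n) \<le> ennreal (K ^ (k+1)) * ennreal (a k)"
        by (rule mult_left_mono) simp
    qed
    also have "\<dots> = (\<Sum>k\<le>n. ennreal ((1/2::real) ^ (k+1)))"
    proof (rule sum.cong)
      fix k assume "k \<in> {..n}"
      have "K ^ (k+1) * a k = (1/2::real) ^ (k+1)"
        unfolding a_def using K1 by (simp add: power_mult_distrib power_divide)
      then show "ennreal (K ^ (k+1)) * ennreal (a k) = ennreal ((1/2::real) ^ (k+1))"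
        using K1 apos[of k] by (simp add: ennreal_mult[symmetric])
    qed simp
    also have "\<dots> = ennreal (\<Sum>k\<le>n. (1/2::real) ^ (k+1))"
      by (rule sum_ennreal) simp
    also have "\<dots> \<le> ennreal 1" unfolding half_sum by (intro ennreal_leI) simp
    finally show ?thesis .
  qed
  have "(SUP n. \<rho> (h n)) \<le> ennreal 1" by (rule SUP_least) (rule hbound)
  then have "(SUP n. \<rho> (h n)) < \<infinity>" by (simp add: le_less_trans)
  then have fin: "\<rho> (\<lambda>x. SUP n. h n x) < \<infinity>"
    using assms(3) nd unfolding weak_fatou_def by blast
  then obtain r where r: "\<rho> (\<lambda>x. SUP n. h n x) = ennreal r" "r \<ge> 0"
    using less_top_ennreal by auto
  have le: "\<rho> (\<lambda>x. SUP n. F k n x) \<le> \<rho> (\<lambda>x. SUP n. h n x)" for k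
  proof (rule fqn_mono[OF fqn])
    show "(\<lambda>x. SUP n. F k n x) \<in> borel_measurable M"
      by (rule borel_measurable_SUP) (auto simp: Fm)
    show "(\<lambda>x. SUP n. h n x) \<in> borel_measurable M"
      by (rule borel_measurable_SUP) (auto simp: hm)
    show "AE x in M. (SUP n. F k n x) \<le> (SUP n. h n x)"
    proof (rule AE_I2)
      fix x
      show "(SUP n. F k n x) \<le> (SUP n. h n x)"
      proof (rule SUP_least)
        fix n
        have "F k n x \<le> F k (max n k) x"
          using lift_Suc_mono_le[of "\<lambda>m. F k m x", OF Finc] by simp
        also have "\<dots> \<le> h (max n k) x"
          unfolding h_def by (rule member_le_sum) auto
        also have "\<dots> \<le> (SUP n. h n x)" by (rule SUP_upper) simp
        finally show "F k n x \<le> (SUP n. h n x)" .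
      qed
    qed
  qed
  define k where "k = nat \<lceil>r\<rceil> + 1"
  have "ennreal (real k) \<le> ennreal r" using order_trans[OF Fbig[of k] le[of k]] r(1) by simp
  then have "real k \<le> r" using r(2) by (simp add: ennreal_le_iff)
  moreover have "r < real k" unfolding k_def by linarith
  ultimately show False by simp
qed

end
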